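(* Consider the Histogram Partitioning algorithm (described in the context) on $N$ distinct keys over $p$ processors, where in each round $j$ each key of $\gamma_j$ is sampled independently with probability $\frac{cp}{|\gamma_j|\log^* p}$ for the constant $c=3\ln 2.5$. Once at most $p/\log^* p$ splitters remain unachieved, with high probability all splitters are achieved after $O(\log^* p)$ further rounds.
   Context: Setting: $N$ distinct keys from a totally ordered set are distributed across $p$ processors, $N/p$ keys per processor. For $\ell\in\{1,\dots,p-1\}$, the target range of splitter $\ell$ is the rank range $[\frac{N\ell}{p},\frac{N\ell}{p}+\frac{N}{p}]$; splitter $\ell$ is achieved in a round if some key with rank in this range is sampled in that round (and stays achieved afterwards). Histogram Partitioning proceeds in rounds; in round $j$, keys are sampled independently from a set $\gamma_j$ ($\gamma_1$ = all keys), and the global ranks of the samples are computed and made known to all processors. For each unachieved splitter $\ell$, $L_j(\ell)$ is the largest key sampled before round $j$ with rank below $\frac{N\ell}{p}$ (or the smallest key) and $U_j(\ell)$ the smallest key sampled before round $j$ with rank above $\frac{N\ell}{p}+\frac{N}{p}$ (or the largest key); $\gamma_j$ is the union over splitters $\ell$ unachieved before round $j$ of the keys between $L_j(\ell)$ and $U_j(\ell)$. $\log^* x=0$ for $x\le1$ and $\log^* x=1+\log^*(\log x)$ for $x>1$. "With high probability" means with probability tending to $1$ as $p\to\infty$. *)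

theory Defs
  imports "HOL-Probability.Probability"
begin

definition log_star :: "real \<Rightarrow> nat" where
  "log_star x = (LEAST k. ((log 2) ^^ k) x \<le> 1)"

(* Keys are identified with their global ranks 1..N.
   Target range of splitter l: ranks in [N l / p, N l / p + N / p]. *)
definition target :: "nat \<Rightarrow> nat \<Rightarrow> nat \<Rightarrow> nat set" where
  "target N p l = {k \<in> {1..N}. real N * real l / real p \<le> real k \<and>
                                real k \<le> real N * real l / real p + real N / real p}"

(* S = set of keys sampled so far *)
definition achieved :: "nat \<Rightarrow> nat \<Rightarrow> nat set \<Rightarrow> nat \<Rightarrow> bool" where
  "achieved N p S l \<longleftrightarrow> (\<exists>k\<in>S. k \<in> target N p l)"

definition unachieved :: "nat \<Rightarrow> nat \<Rightarrow> nat set \<Rightarrow> nat set" where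
  "unachieved N p S = {l \<in> {1..p-1}. \<not> achieved N p S l}"

definition Lo :: "nat \<Rightarrow> nat \<Rightarrow> nat set \<Rightarrow> nat \<Rightarrow> nat" where
  "Lo N p S l = (if \<exists>k\<in>S. real k < real N * real l / real p
                 then Max {k\<in>S. real k < real N * real l / real p} else 1)"

definition Up :: "nat \<Rightarrow> nat \<Rightarrow> nat set \<Rightarrow> nat \<Rightarrow> nat" where
  "Up N p S l = (if \<exists>k\<in>S. real k > real N * real l / real p + real N / real p
                 then Min {k\<in>S. real k > real N * real l / real p + real N / real p} else N)"

definition gamma :: "nat \<Rightarrow> nat \<Rightarrow> nat set \<Rightarrow> nat set" where
  "gamma N p S = (\<Union>l\<in>unachieved N p S. {Lo N p S l .. Up N p S l})"

definition sample :: "nat set \<Rightarrow> real \<Rightarrow> nat set pmf" where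
  "sample A q = map_pmf (\<lambda>f. {x \<in> A. f x}) (Pi_pmf A False (\<lambda>_. bernoulli_pmf q))"

definition hp_const :: real where
  "hp_const = 3 * ln (5/2)"

definition hp_step :: "nat \<Rightarrow> nat \<Rightarrow> nat set \<Rightarrow> nat set pmf" where
  "hp_step N p S =
     map_pmf (\<lambda>T. S \<union> T)
       (sample (gamma N p S)
          (min 1 (hp_const * real p / (real (card (gamma N p S)) * real (log_star (real p))))))"

(* list of states S_0, ..., S_n; S_j = keys sampled in the first j rounds *)
fun hp_traj :: "nat \<Rightarrow> nat \<Rightarrow> nat \<Rightarrow> nat set list pmf" where
  "hp_traj N p 0 = return_pmf [{}]"
| "hp_traj N p (Suc n) =
     bind_pmf (hp_traj N p n) (\<lambda>xs. map_pmf (\<lambda>T. xs @ [T]) (hp_step N p (last xs)))"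

end

theory Submission
  imports Defs "HOL-Real_Asymp.Real_Asymp"
begin

locale hp =
  fixes N p :: nat
  assumes p2: "2 \<le> p" and Npos: "0 < N" and pdvd: "p dvd N"
begin

definition n0 :: nat where "n0 = N div p"

lemma N_eq: "N = n0 * p"
  using pdvd by (simp add: n0_def)

lemma n0_pos: "1 \<le> n0"
  using N_eq Npos by (cases n0) auto

lemma real_N: "real N = real n0 * real p"
  using N_eq of_nat_mult by metis

lemma real_Nl: "real N * real l / real p = real (n0 * l)"
  using p2 unfolding real_N by simp

lemma real_Np: "real N / real p = real n0"
  using p2 unfolding real_N by simp

lemma rl_less: "(real a * real b < real k) = (a*b < k)"
  by (simp flip: of_nat_mult)
lemma rl_le: "(real a * real b \<le> real k) = (a*b \<le> k)"
  by (simp flip: of_nat_mult)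
lemma rl_less2: "(real a * real b + real c < real k) = (a*b+c < k)"
  by (simp flip: of_nat_mult of_nat_add)
lemma rl_le2: "(real k \<le> real a * real b + real c) = (k \<le> a*b+c)"
  by (simp flip: of_nat_mult of_nat_add)

lemma rl_less': "(real k < real a * real b) = (k < a*b)"
  by (simp flip: of_nat_mult)
lemma rl_le': "(real k \<le> real a * real b) = (k \<le> a*b)"
  by (simp flip: of_nat_mult)

lemma target_eq:
  assumes "1 \<le> l" "l \<le> p - 1"
  shows "target N p l = {n0*l .. n0*l+n0}"
proof -
  have "n0*l + n0 = n0 * (l+1)" by simp
  also have "\<dots> \<le> n0 * p" using assms p2 by (intro mult_left_mono) auto
  finally have a: "n0*l + n0 \<le> N" using N_eq by simp
  have b: "1 \<le> n0 * l" using n0_pos assms by simp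
  have b': "\<And>x. n0*l \<le> x \<Longrightarrow> Suc 0 \<le> x" using b by linarith
  show ?thesis
  proof (rule set_eqI)
    fix x
    have "x \<in> target N p l \<longleftrightarrow> x \<in> {1..N} \<and> n0*l \<le> x \<and> x \<le> n0*l+n0"
      unfolding target_def real_Nl real_Np of_nat_add[symmetric] of_nat_le_iff mem_Collect_eq by (rule refl)
    then show "x \<in> target N p l \<longleftrightarrow> x \<in> {n0*l..n0*l+n0}" using a b'[of x]
      by auto
  qed
qed

lemma achieved_iff:
  assumes "1 \<le> l" "l \<le> p - 1"
  shows "achieved N p S l \<longleftrightarrow> (\<exists>k\<in>S. n0*l \<le> k \<and> k \<le> n0*l+n0)"
  unfolding achieved_def target_eq[OF assms] by auto

lemma Lo_eq: "Lo N p S l = (if \<exists>k\<in>S. k < n0*l then Max {k\<in>S. k < n0*l} else 1)"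
  unfolding Lo_def real_Nl by (simp add: rl_less')

lemma Up_eq: "Up N p S l = (if \<exists>k\<in>S. n0*l+n0 < k then Min {k\<in>S. n0*l+n0 < k} else N)"
proof -
  have "\<And>k. (real N * real l / real p + real N / real p < real k) = (n0*l+n0 < k)"
    unfolding real_Nl real_Np by (simp add: rl_less2)
  then show ?thesis unfolding Up_def by simp
qed

lemma unach_sub: "unachieved N p S \<subseteq> {1..p-1}"
  unfolding unachieved_def by auto

lemma finite_unach[simp]: "finite (unachieved N p S)"
  using finite_subset[OF unach_sub] by blast

lemma unach_mono: "S \<subseteq> S' \<Longrightarrow> unachieved N p S' \<subseteq> unachieved N p S"
  unfolding unachieved_def achieved_def by auto

lemma unach_mem: "l \<in> unachieved N p S \<Longrightarrow> 1 \<le> l \<and> l \<le> p - 1"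
  unfolding unachieved_def by auto

lemma unach_iff:
  assumes "l \<in> unachieved N p S" "k \<in> S"
  shows "\<not> (n0*l \<le> k \<and> k \<le> n0*l+n0)"
  using assms unach_mem[OF assms(1)] achieved_iff unfolding unachieved_def by auto

lemma tl_le_N: "1 \<le> l \<Longrightarrow> l \<le> p - 1 \<Longrightarrow> n0*l+n0 \<le> N"
proof -
  assume "1 \<le> l" "l \<le> p - 1"
  have "n0*l + n0 = n0 * (l+1)" by simp
  also have "\<dots> \<le> n0 * p" using \<open>l \<le> p - 1\<close> p2 by (intro mult_left_mono) auto
  finally show ?thesis using N_eq by simp
qed

lemma t0_ge1: "1 \<le> l \<Longrightarrow> 1 \<le> n0*l"
  using n0_pos by simp

lemma Lo_bounds:
  assumes S: "S \<subseteq> {1..N}" and l: "1 \<le> l" "l \<le> p - 1"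
  shows "1 \<le> Lo N p S l \<and> Lo N p S l \<le> n0*l"
proof -
  have fin: "finite {k\<in>S. k < n0*l}" using finite_subset[OF S(1)] by simp
  show ?thesis
  proof (cases "\<exists>k\<in>S. k < n0*l")
    case True
    then have ne: "{k\<in>S. k < n0*l} \<noteq> {}" by auto
    have "Max {k\<in>S. k < n0*l} \<in> {k\<in>S. k < n0*l}" using Max_in[OF fin ne] .
    then show ?thesis unfolding Lo_eq using True S by auto
  next
    case False
    then show ?thesis unfolding Lo_eq using t0_ge1[OF l(1)] by auto
  qed
qed

lemma Up_bounds:
  assumes S: "S \<subseteq> {1..N}" and l: "1 \<le> l" "l \<le> p - 1"
  shows "Up N p S l \<le> N \<and> n0*l+n0 \<le> Up N p S l"
proof -
  have fin: "finite {k\<in>S. n0*l+n0 < k}" using finite_subset[OF S(1)] by simp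
  show ?thesis
  proof (cases "\<exists>k\<in>S. n0*l+n0 < k")
    case True
    then have ne: "{k\<in>S. n0*l+n0 < k} \<noteq> {}" by auto
    have "Min {k\<in>S. n0*l+n0 < k} \<in> {k\<in>S. n0*l+n0 < k}" using Min_in[OF fin ne] .
    then show ?thesis unfolding Up_eq using True S by auto
  next
    case False
    then show ?thesis unfolding Up_eq using tl_le_N[OF l] by auto
  qed
qed

lemma Lo_ge:
  assumes S: "S \<subseteq> {1..N}" and "k \<in> S" "k < n0*l"
  shows "k \<le> Lo N p S l"
proof -
  have fin: "finite {k\<in>S. k < n0*l}" using finite_subset[OF S(1)] by simp
  show ?thesis unfolding Lo_eq using assms fin by (auto intro: Max_ge)
qed

lemma Up_le:
  assumes S: "S \<subseteq> {1..N}" and "k \<in> S" "n0*l+n0 < k"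
  shows "Up N p S l \<le> k"
proof -
  have fin: "finite {k\<in>S. n0*l+n0 < k}" using finite_subset[OF S(1)] by simp
  show ?thesis unfolding Up_eq using assms fin by (auto intro: Min_le)
qed

lemma Lo_mono:
  assumes S: "S' \<subseteq> {1..N}" "S \<subseteq> S'" and l: "1 \<le> l" "l \<le> p - 1"
  shows "Lo N p S l \<le> Lo N p S' l"
proof (cases "\<exists>k\<in>S. k < n0*l")
  case True
  have fin: "finite {k\<in>S'. k < n0*l}" using finite_subset[OF S(1)] by simp
  from True obtain k where "k \<in> S" "k < n0*l" by auto
  then have "Max {k\<in>S. k < n0*l} \<le> Max {k\<in>S'. k < n0*l}"
    using S fin by (intro Max_mono) auto
  then show ?thesis unfolding Lo_eq using True S by auto
next
  case False
  then show ?thesis using conjunct1[OF Lo_bounds[OF S(1) l]] unfolding Lo_eq[of S] by simp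
qed

lemma Up_mono:
  assumes S: "S' \<subseteq> {1..N}" "S \<subseteq> S'" and l: "1 \<le> l" "l \<le> p - 1"
  shows "Up N p S' l \<le> Up N p S l"
proof (cases "\<exists>k\<in>S. n0*l+n0 < k")
  case True
  have fin: "finite {k\<in>S'. n0*l+n0 < k}" using finite_subset[OF S(1)] by simp
  from True obtain k where "k \<in> S" "n0*l+n0 < k" by auto
  then have "Min {k\<in>S'. n0*l+n0 < k} \<le> Min {k\<in>S. n0*l+n0 < k}"
    using S fin by (intro Min_antimono) auto
  then show ?thesis unfolding Up_eq using True S by auto
next
  case False
  then show ?thesis using conjunct1[OF Up_bounds[OF S(1) l]] unfolding Up_eq[of S] by simp
qed

lemma gamma_sub: "S \<subseteq> {1..N} \<Longrightarrow> gamma N p S \<subseteq> {1..N}"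
proof
  fix x assume S: "S \<subseteq> {1..N}" and "x \<in> gamma N p S"
  then obtain l where l: "l \<in> unachieved N p S" "x \<in> {Lo N p S l .. Up N p S l}" unfolding gamma_def by auto
  have "1 \<le> Lo N p S l" "Up N p S l \<le> N" using Lo_bounds[OF S] Up_bounds[OF S] unach_mem[OF l(1)] by auto
  then show "x \<in> {1..N}" using l(2) by auto
qed

lemma finite_gamma[simp]: "S \<subseteq> {1..N} \<Longrightarrow> finite (gamma N p S)"
  using gamma_sub finite_subset by blast

lemma card_gamma_le: "S \<subseteq> {1..N} \<Longrightarrow> card (gamma N p S) \<le> N"
  using card_mono[OF _ gamma_sub] by fastforce

lemma interval_sub_gamma: "l \<in> unachieved N p S \<Longrightarrow> {Lo N p S l .. Up N p S l} \<subseteq> gamma N p S"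
  unfolding gamma_def by auto

lemma gamma_empty: "unachieved N p S = {} \<Longrightarrow> gamma N p S = {}"
  unfolding gamma_def by auto

lemma card_gamma_ge:
  assumes S: "S \<subseteq> {1..N}"
  shows "n0 * card (unachieved N p S) \<le> card (gamma N p S)"
proof -
  let ?U = "unachieved N p S"
  let ?B = "\<lambda>l. {n0*l ..< n0*l+n0}"
  have sub: "(\<Union>l\<in>?U. ?B l) \<subseteq> gamma N p S"
  proof
    fix x assume "x \<in> (\<Union>l\<in>?U. ?B l)"
    then obtain l where l: "l \<in> ?U" "x \<in> ?B l" by auto
    have "Lo N p S l \<le> n0*l" "n0*l+n0 \<le> Up N p S l"
      using Lo_bounds[OF S] Up_bounds[OF S] unach_mem[OF l(1)] by auto
    then have "Lo N p S l \<le> x" "x \<le> Up N p S l" using l(2) by auto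
    then show "x \<in> gamma N p S" using interval_sub_gamma[OF l(1)] by auto
  qed
  have disj: "\<forall>i\<in>?U. \<forall>j\<in>?U. i \<noteq> j \<longrightarrow> ?B i \<inter> ?B j = {}"
  proof (intro ballI impI)
    fix i j :: nat assume "i \<noteq> j"
    show "?B i \<inter> ?B j = {}"
    proof (cases "i < j")
      case True
      then have "n0*(i+1) \<le> n0*j" by (intro mult_le_mono2) simp
      then have "n0*i + n0 \<le> n0*j" by simp
      then show ?thesis by auto
    next
      case False
      then have "j < i" using \<open>i \<noteq> j\<close> by auto
      then have "n0*(j+1) \<le> n0*i" by (intro mult_le_mono2) simp
      then have "n0*j + n0 \<le> n0*i" by simp
      then show ?thesis by auto
    qed
  qed
  have "card (\<Union>l\<in>?U. ?B l) = (\<Sum>l\<in>?U. card (?B l))"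
    by (rule card_UN_disjoint) (use disj in auto)
  also have "\<dots> = n0 * card ?U" by simp
  finally show ?thesis using card_mono[OF finite_gamma[OF S] sub] by simp
qed

end

lemma set_sample: "finite A \<Longrightarrow> T \<in> set_pmf (sample A q) \<Longrightarrow> T \<subseteq> A"
  unfolding sample_def by auto

lemma prob_sample_avoid:
  assumes A: "finite A" and B: "B \<subseteq> A" and q: "0 \<le> q" "q \<le> 1"
  shows "measure_pmf.prob (sample A q) {T. T \<inter> B = {}} = (1 - q) ^ card B"
proof -
  let ?P = "Pi_pmf A False (\<lambda>_. bernoulli_pmf q)"
  let ?C = "\<lambda>x. if x \<in> B then {False} else (UNIV :: bool set)"
  have pre: "{f. {x \<in> A. f x} \<inter> B = {}} = Pi A ?C"
    using B by (auto simp: Pi_def)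
  have "measure_pmf.prob (sample A q) {T. T \<inter> B = {}} = measure_pmf.prob ?P (Pi A ?C)"
    unfolding sample_def by (simp add: pre)
  also have "\<dots> = (\<Prod>x\<in>A. measure_pmf.prob (bernoulli_pmf q) (?C x))"
    using A by (rule measure_Pi_pmf_Pi)
  also have "\<dots> = (\<Prod>x\<in>A. if x \<in> B then 1 - q else 1)"
    using q by (intro prod.cong) (auto simp: measure_pmf_single)
  also have "\<dots> = (1 - q) ^ card B"
    using A B by (simp add: prod.If_cases Int_absorb1)
  finally show ?thesis .
qed

lemma emeasure_sample_avoid:
  assumes A: "finite A" and B: "B \<subseteq> A" and q: "0 \<le> q" "q \<le> 1"
  shows "emeasure (measure_pmf (sample A q)) {T. T \<inter> B = {}} = ennreal ((1 - q) ^ card B)"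
  using prob_sample_avoid[OF assms] by (simp add: measure_pmf.emeasure_eq_measure)

lemma geom_bound:
  fixes x :: real
  assumes "0 \<le> x" "x < 1"
  shows "(\<Sum>d\<in>{1..m}. x ^ d) \<le> 1 / (1 - x)"
proof (cases "m = 0")
  case True then show ?thesis using assms by simp
next
  case False
  have "(1 - x) * (\<Sum>d=1..m. x ^ d) = x ^ 1 - x ^ Suc m"
    using False by (intro sum_gp_multiplied) simp
  also have "\<dots> \<le> 1"
  proof -
    have "0 \<le> x * x ^ m" using assms by simp
    moreover have "x ^ 1 - x ^ Suc m = x - x * x ^ m" by simp
    ultimately show ?thesis using assms by linarith
  qed
  finally show ?thesis using assms by (simp add: field_simps mult.commute)
qed


context hp begin

lemma fl_bound:
  assumes S: "S \<subseteq> {1..N}" and T: "T \<subseteq> gamma N p S" and l: "l \<in> unachieved N p S"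
  shows "(if l \<in> unachieved N p (S \<union> T) then of_nat (card {Lo N p (S \<union> T) l .. Up N p (S \<union> T) l}) else 0 :: ennreal)
     \<le> (\<Sum>d\<in>{1..n0*l - Lo N p S l}. indicator {T. T \<inter> {n0*l+1-d..n0*l+n0} = {}} T)
        + of_nat (n0+1) * indicator {T. T \<inter> {n0*l..n0*l+n0} = {}} T
        + (\<Sum>d\<in>{1..Up N p S l - (n0*l+n0)}. indicator {T. T \<inter> {n0*l..n0*l+n0+d-1} = {}} T)"
    (is "?lhs \<le> ?R1 + ?R0 + ?R2")
proof (cases "l \<in> unachieved N p (S \<union> T)")
  case False
  then show ?thesis by simp
next
  case True
  define S' where "S' = S \<union> T"
  define t0 where "t0 = n0*l"
  define t1 where "t1 = n0*l+n0"
  have lr: "1 \<le> l" "l \<le> p - 1" using unach_mem[OF l] by auto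
  have S': "S' \<subseteq> {1..N}" using S T gamma_sub[OF S] unfolding S'_def by auto
  have SS': "S \<subseteq> S'" unfolding S'_def by auto
  have U': "l \<in> unachieved N p S'" using True unfolding S'_def .
  define Lo' where "Lo' = Lo N p S' l"
  define Up' where "Up' = Up N p S' l"
  have b1: "Lo N p S l \<le> Lo'" "Lo' \<le> t0" "1 \<le> Lo'"
    using Lo_mono[OF S' SS' lr] Lo_bounds[OF S' lr] unfolding Lo'_def t0_def by auto
  have b2: "Up' \<le> Up N p S l" "t1 \<le> Up'" "Up' \<le> N"
    using Up_mono[OF S' SS' lr] Up_bounds[OF S' lr] unfolding Up'_def t1_def by auto
  have t01: "t1 = t0 + n0" unfolding t0_def t1_def by simp
  have A: "T \<inter> {t0..t1} = {}"
    using unach_iff[OF U'] unfolding S'_def t0_def t1_def by auto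
  have cardI: "card {Lo'..Up'} = (t0 - Lo') + (n0+1) + (Up' - t1)"
    using b1 b2 t01 by simp
  have B: "T \<inter> {t0+1-d..t1} = {}" if d: "d \<in> {1..t0 - Lo'}" for d
  proof (rule ccontr)
    assume "T \<inter> {t0+1-d..t1} \<noteq> {}"
    then obtain k where k: "k \<in> T" "t0+1-d \<le> k" "k \<le> t1" by auto
    show False
    proof (cases "t0 \<le> k")
      case True then show False using A k by auto
    next
      case False
      then have "k \<le> Lo'" unfolding Lo'_def t0_def using Lo_ge[OF S'] k(1) unfolding S'_def by auto
      then show False using k(2) d b1 by auto
    qed
  qed
  have C: "T \<inter> {t0..t1+d-1} = {}" if d: "d \<in> {1..Up' - t1}" for d
  proof (rule ccontr)
    assume "T \<inter> {t0..t1+d-1} \<noteq> {}"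
    then obtain k where k: "k \<in> T" "t0 \<le> k" "k \<le> t1+d-1" by auto
    show False
    proof (cases "k \<le> t1")
      case True then show False using A k by auto
    next
      case False
      then have "Up' \<le> k" unfolding Up'_def t1_def using Up_le[OF S'] k(1) unfolding S'_def t1_def by auto
      then show False using k(3) d b2 by auto
    qed
  qed
  have R1: "of_nat (t0 - Lo') \<le> ?R1"
  proof -
    have "of_nat (t0 - Lo') = (\<Sum>d\<in>{1..t0 - Lo'}. indicator {T. T \<inter> {n0*l+1-d..n0*l+n0} = {}} T :: ennreal)"
      using B unfolding t0_def t1_def by (simp add: indicator_def)
    also have "\<dots> \<le> ?R1"
      using b1 unfolding t0_def by (intro sum_mono2) auto
    finally show ?thesis .
  qed
  have R2: "of_nat (Up' - t1) \<le> ?R2"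
  proof -
    have "of_nat (Up' - t1) = (\<Sum>d\<in>{1..Up' - t1}. indicator {T. T \<inter> {n0*l..n0*l+n0+d-1} = {}} T :: ennreal)"
      using C unfolding t0_def t1_def by (simp add: indicator_def)
    also have "\<dots> \<le> ?R2"
      using b2 unfolding t1_def by (intro sum_mono2) auto
    finally show ?thesis .
  qed
  have R0: "of_nat (n0+1) = ?R0"
    using A unfolding t0_def t1_def by (simp add: indicator_def)
  have "?lhs = of_nat (t0 - Lo') + of_nat (n0+1) + of_nat (Up' - t1)"
    using True cardI unfolding Lo'_def Up'_def S'_def by simp
  also have "\<dots> \<le> ?R1 + ?R0 + ?R2"
    using R0 R1 R2 by (intro add_mono) auto
  finally show ?thesis .
qed

lemma geo2:
  fixes q :: real
  assumes "0 < q" "q \<le> 1"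
  shows "(\<Sum>d\<in>{1..m}. (1-q)^(k+d)) \<le> (1-q)^k / q"
proof -
  have "(\<Sum>d\<in>{1..m}. (1-q)^(k+d)) = (1-q)^k * (\<Sum>d\<in>{1..m}. (1-q)^d)"
    by (simp add: sum_distrib_left power_add)
  also have "\<dots> \<le> (1-q)^k * (1 / (1 - (1-q)))"
    using assms by (intro mult_left_mono geom_bound) auto
  finally show ?thesis by simp
qed

lemma step_card_bound:
  assumes S: "S \<subseteq> {1..N}" and q: "0 < q" "q \<le> 1"
  shows "(\<integral>\<^sup>+T. of_nat (card (gamma N p (S \<union> T))) \<partial>measure_pmf (sample (gamma N p S) q))
          \<le> ennreal (real (card (unachieved N p S)) * ((1-q)^n0 * (real n0 + 1 + 2/q)))"
proof -
  let ?G = "gamma N p S"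
  let ?U = "unachieved N p S"
  let ?M = "measure_pmf (sample ?G q)"
  define D1 where "D1 l = {1..n0*l - Lo N p S l}" for l
  define D2 where "D2 l = {1..Up N p S l - (n0*l+n0)}" for l
  define g where "g l T = (\<Sum>d\<in>D1 l. indicator {T. T \<inter> {n0*l+1-d..n0*l+n0} = {}} T)
        + of_nat (n0+1) * indicator {T. T \<inter> {n0*l..n0*l+n0} = {}} T
        + (\<Sum>d\<in>D2 l. indicator {T. T \<inter> {n0*l..n0*l+n0+d-1} = {}} T :: ennreal)" for l T
  have fin: "finite ?G" using S by simp
  have pw: "of_nat (card (gamma N p (S \<union> T))) \<le> (\<Sum>l\<in>?U. g l T)" if T: "T \<in> set_pmf (sample ?G q)" for T
  proof -
    have TG: "T \<subseteq> ?G" using set_sample[OF fin T] .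
    let ?U' = "unachieved N p (S \<union> T)"
    let ?I = "\<lambda>l. {Lo N p (S \<union> T) l .. Up N p (S \<union> T) l}"
    have U'U: "?U' \<subseteq> ?U" by (rule unach_mono) auto
    have "card (gamma N p (S \<union> T)) \<le> (\<Sum>l\<in>?U'. card (?I l))"
      unfolding gamma_def by (rule card_UN_le) simp
    also have "\<dots> = (\<Sum>l\<in>?U'. if l \<in> ?U' then card (?I l) else 0)"
      by (intro sum.cong) auto
    also have "\<dots> \<le> (\<Sum>l\<in>?U. if l \<in> ?U' then card (?I l) else 0)"
      using U'U by (intro sum_mono2) auto
    finally have "of_nat (card (gamma N p (S \<union> T))) \<le> (of_nat (\<Sum>l\<in>?U. if l \<in> ?U' then card (?I l) else 0) :: ennreal)"
      by (simp only: of_nat_le_iff)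
    also have "\<dots> = (\<Sum>l\<in>?U. if l \<in> ?U' then of_nat (card (?I l)) else 0)"
      unfolding of_nat_sum by (intro sum.cong refl) simp
    also have "\<dots> \<le> (\<Sum>l\<in>?U. g l T)"
      by (intro sum_mono) (unfold g_def D1_def D2_def, rule fl_bound[OF S TG], simp)
    finally show ?thesis .
  qed
  have "(\<integral>\<^sup>+T. of_nat (card (gamma N p (S \<union> T))) \<partial>?M) \<le> (\<integral>\<^sup>+T. (\<Sum>l\<in>?U. g l T) \<partial>?M)"
    by (intro nn_integral_mono_AE AE_pmfI pw)
  also have "\<dots> = (\<Sum>l\<in>?U. \<integral>\<^sup>+T. g l T \<partial>?M)"
    by (intro nn_integral_sum) simp
  also have "\<dots> \<le> (\<Sum>l\<in>?U. ennreal ((1-q)^n0 * (real n0 + 1 + 2/q)))"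
  proof (intro sum_mono)
    fix l assume l: "l \<in> ?U"
    have lr: "1 \<le> l" "l \<le> p - 1" using unach_mem[OF l] by auto
    have LoB: "1 \<le> Lo N p S l" "Lo N p S l \<le> n0*l" using Lo_bounds[OF S lr] by auto
    have UpB: "Up N p S l \<le> N" "n0*l+n0 \<le> Up N p S l" using Up_bounds[OF S lr] by auto
    have Isub: "{Lo N p S l .. Up N p S l} \<subseteq> ?G" by (rule interval_sub_gamma[OF l])
    have e1: "emeasure ?M {T. T \<inter> {n0*l+1-d..n0*l+n0} = {}} = ennreal ((1-q)^(n0+d))" if d: "d \<in> D1 l" for d
    proof -
      have "{n0*l+1-d..n0*l+n0} \<subseteq> {Lo N p S l .. Up N p S l}" using d LoB UpB unfolding D1_def by auto
      then have "{n0*l+1-d..n0*l+n0} \<subseteq> ?G" using Isub by blast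
      moreover have "card {n0*l+1-d..n0*l+n0} = n0 + d" using d LoB unfolding D1_def by auto
      ultimately show ?thesis using emeasure_sample_avoid[OF fin _ less_imp_le[OF q(1)] q(2)] by simp
    qed
    have e2: "emeasure ?M {T. T \<inter> {n0*l..n0*l+n0+d-1} = {}} = ennreal ((1-q)^(n0+d))" if d: "d \<in> D2 l" for d
    proof -
      have "{n0*l..n0*l+n0+d-1} \<subseteq> {Lo N p S l .. Up N p S l}" using d LoB UpB unfolding D2_def by auto
      then have "{n0*l..n0*l+n0+d-1} \<subseteq> ?G" using Isub by blast
      moreover have "card {n0*l..n0*l+n0+d-1} = n0 + d" using d unfolding D2_def by auto
      ultimately show ?thesis using emeasure_sample_avoid[OF fin _ less_imp_le[OF q(1)] q(2)] by simp
    qed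
    have e0: "emeasure ?M {T. T \<inter> {n0*l..n0*l+n0} = {}} = ennreal ((1-q)^(n0+1))"
    proof -
      have "{n0*l..n0*l+n0} \<subseteq> {Lo N p S l .. Up N p S l}" using LoB UpB by auto
      then have "{n0*l..n0*l+n0} \<subseteq> ?G" using Isub by blast
      moreover have "card {n0*l..n0*l+n0} = n0 + 1" by auto
      ultimately show ?thesis using emeasure_sample_avoid[OF fin _ less_imp_le[OF q(1)] q(2)] by simp
    qed
    have q1: "0 \<le> 1 - q" using q by simp
    define E1 where "E1 d = {T. T \<inter> {n0*l+1-d..n0*l+n0} = {}}" for d
    define E2 where "E2 d = {T. T \<inter> {n0*l..n0*l+n0+d-1} = {}}" for d
    define E0 where "E0 = {T. T \<inter> {n0*l..n0*l+n0} = {}}"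
    have gl: "g l T = (\<Sum>d\<in>D1 l. indicator (E1 d) T) + of_nat (n0+1) * indicator E0 T + (\<Sum>d\<in>D2 l. indicator (E2 d) T)" for T
      unfolding g_def E1_def E2_def E0_def ..
    have i1: "(\<integral>\<^sup>+T. (\<Sum>d\<in>D1 l. indicator (E1 d) T) \<partial>?M) = (\<Sum>d\<in>D1 l. ennreal ((1-q)^(n0+d)))"
    proof -
      have "(\<integral>\<^sup>+T. (\<Sum>d\<in>D1 l. indicator (E1 d) T) \<partial>?M) = (\<Sum>d\<in>D1 l. emeasure ?M (E1 d))"
        by (subst nn_integral_sum) auto
      also have "\<dots> = (\<Sum>d\<in>D1 l. ennreal ((1-q)^(n0+d)))"
        by (intro sum.cong refl) (unfold E1_def, rule e1)
      finally show ?thesis .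
    qed
    have i2: "(\<integral>\<^sup>+T. (\<Sum>d\<in>D2 l. indicator (E2 d) T) \<partial>?M) = (\<Sum>d\<in>D2 l. ennreal ((1-q)^(n0+d)))"
    proof -
      have "(\<integral>\<^sup>+T. (\<Sum>d\<in>D2 l. indicator (E2 d) T) \<partial>?M) = (\<Sum>d\<in>D2 l. emeasure ?M (E2 d))"
        by (subst nn_integral_sum) auto
      also have "\<dots> = (\<Sum>d\<in>D2 l. ennreal ((1-q)^(n0+d)))"
        by (intro sum.cong refl) (unfold E2_def, rule e2)
      finally show ?thesis .
    qed
    have i0: "(\<integral>\<^sup>+T. of_nat (n0+1) * indicator E0 T \<partial>?M) = of_nat (n0+1) * ennreal ((1-q)^(n0+1))"
    proof -
      have "(\<integral>\<^sup>+T. of_nat (n0+1) * indicator E0 T \<partial>?M) = of_nat (n0+1) * emeasure ?M E0"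
        by (subst nn_integral_cmult) auto
      then show ?thesis unfolding E0_def e0 .
    qed
    have "(\<integral>\<^sup>+T. g l T \<partial>?M) = (\<Sum>d\<in>D1 l. ennreal ((1-q)^(n0+d))) + of_nat (n0+1) * ennreal ((1-q)^(n0+1))
            + (\<Sum>d\<in>D2 l. ennreal ((1-q)^(n0+d)))"
      unfolding gl by (subst nn_integral_add, simp, simp, subst nn_integral_add, simp, simp) (simp only: i0 i1 i2)
    also have "\<dots> = ennreal ((\<Sum>d\<in>D1 l. (1-q)^(n0+d)) + (real n0 + 1) * (1-q)^(n0+1) + (\<Sum>d\<in>D2 l. (1-q)^(n0+d)))"
      using q1 by (simp add: ennreal_plus ennreal_mult sum_nonneg ennreal_of_nat_eq_real_of_nat add.commute)
    also have "\<dots> \<le> ennreal ((1-q)^n0 * (real n0 + 1 + 2/q))"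
    proof (intro ennreal_leI)
      have a: "(\<Sum>d\<in>D1 l. (1-q)^(n0+d)) \<le> (1-q)^n0 / q" unfolding D1_def using geo2 q by blast
      have b: "(\<Sum>d\<in>D2 l. (1-q)^(n0+d)) \<le> (1-q)^n0 / q" unfolding D2_def using geo2 q by blast
      have c: "(real n0 + 1) * (1-q)^(n0+1) \<le> (real n0 + 1) * (1-q)^n0"
      proof -
        have "(1-q)^(n0+1) \<le> (1-q)^n0" using q q1 by (intro power_decreasing) auto
        then show ?thesis by (intro mult_left_mono) auto
      qed
      have "(1-q)^n0 * (real n0 + 1 + 2/q) = (real n0 + 1) * (1-q)^n0 + (1-q)^n0 / q + (1-q)^n0 / q"
        by (simp add: field_simps)
      then show "(\<Sum>d\<in>D1 l. (1-q)^(n0+d)) + (real n0 + 1) * (1-q)^(n0+1) + (\<Sum>d\<in>D2 l. (1-q)^(n0+d))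
          \<le> (1-q)^n0 * (real n0 + 1 + 2/q)" using a b c by linarith
    qed
    finally show "(\<integral>\<^sup>+T. g l T \<partial>?M) \<le> ennreal ((1-q)^n0 * (real n0 + 1 + 2/q))" .
  qed
  also have "\<dots> = ennreal (real (card ?U) * ((1-q)^n0 * (real n0 + 1 + 2/q)))"
    using q by (simp add: ennreal_mult ennreal_of_nat_eq_real_of_nat)
  finally show ?thesis .
qed

end

lemma hp_const_ge: "hp_const \<ge> 12/5"
proof -
  have "exp (4/5::real) ^ 5 = exp 4"
    by (simp flip: exp_of_nat_mult)
  also have "\<dots> = exp 1 ^ 4" by (simp flip: exp_of_nat_mult)
  also have "\<dots> \<le> 3 ^ 4" using exp_le by (intro power_mono) auto
  also have "\<dots> < (5/2::real) ^ 5" by (simp add: power_divide)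
  finally have "exp (4/5::real) < 5/2"
    by (rule power_less_imp_less_base) simp
  then have "4/5 < ln (5/2::real)"
    by (metis exp_less_cancel_iff exp_ln zero_less_divide_iff zero_less_numeral)
  then show ?thesis unfolding hp_const_def by simp
qed

lemma hp_const_pos: "hp_const > 0" using hp_const_ge by simp

lemma hp_const_ln2: "hp_const - ln 2 \<ge> 1"
proof -
  have "ln (2::real) \<le> 2 - 1" by (rule ln_le_minus_one) simp
  then show ?thesis using hp_const_ge by simp
qed

lemma one_minus_pow_le_exp:
  fixes q :: real assumes "0 \<le> q" "q \<le> 1"
  shows "(1 - q) ^ n \<le> exp (- (q * n))"
proof -
  have "(1 - q) ^ n \<le> exp (-q) ^ n"
    using assms exp_minus_ge[of q] by (intro power_mono) auto
  also have "\<dots> = exp (- (q * n))" by (simp flip: exp_of_nat_mult)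
  finally show ?thesis .
qed

lemma realB:
  fixes r s c :: real
  assumes "s \<le> 1" "s \<ge> 0" "r > 0" "c > 0"
  shows "s * exp (-c/r) * (2 + 2*r/c) \<le> (2/c) * r"
proof -
  have "s * exp (-c/r) * (2 + 2*r/c) \<le> exp (-c/r) * (2 + 2*r/c)"
    using assms by (intro mult_right_mono) (auto intro: add_nonneg_nonneg)
  also have "\<dots> = (2/c) * r * ((1 + c/r) * exp (-(c/r)))"
    using assms by (simp add: field_simps)
  also have "\<dots> \<le> (2/c) * r * 1"
  proof (intro mult_left_mono)
    have "1 + c/r \<le> exp (c/r)" by (rule exp_ge_add_one_self)
    then have "(1 + c/r) * exp (-(c/r)) \<le> exp (c/r) * exp (-(c/r))"
      by (intro mult_right_mono) auto
    then show "(1 + c/r) * exp (-(c/r)) \<le> 1" by (simp add: exp_minus_inverse)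
  qed (use assms in auto)
  finally show ?thesis by simp
qed

lemma realC:
  fixes r s c e :: real
  assumes "s \<le> r" "s \<ge> 0" "r > 0" "r \<le> e" "e \<le> 1" "c \<ge> 2"
  shows "s * exp (-c/r) * (2 + 2*r/c) \<le> 3 * e * exp (-c/e)"
proof -
  have c0: "c > 0" using assms by simp
  have "2*r/c \<le> 1" using assms by (simp add: field_simps)
  then have h: "2 + 2*r/c \<le> 3" by simp
  have "s * exp (-c/r) * (2 + 2*r/c) \<le> r * exp (-c/r) * 3"
    using assms h by (intro mult_mono) (auto intro: add_nonneg_nonneg)
  also have "\<dots> \<le> e * exp (-c/e) * 3"
  proof -
    have "c / e \<le> c / r" using assms c0 by (intro divide_left_mono) auto
    then have "exp (-c/e) \<ge> exp (-c/r)" by simp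
    then show ?thesis using assms by (intro mult_right_mono mult_mono) auto
  qed
  finally show ?thesis by simp
qed


lemma log_star_exists: "\<exists>k. ((log 2) ^^ k) x \<le> 1"
proof -
  have "\<forall>x::real. x \<le> real n \<longrightarrow> (\<exists>k. ((log 2) ^^ k) x \<le> 1)" for n
  proof (induction n)
    case 0
    then show ?case by (auto intro!: exI[of _ 0])
  next
    case (Suc n)
    show ?case
    proof (intro allI impI)
      fix x :: real assume x: "x \<le> real (Suc n)"
      show "\<exists>k. ((log 2) ^^ k) x \<le> 1"
      proof (cases "x \<le> 1")
        case True then show ?thesis by (intro exI[of _ 0]) simp
      next
        case False
        have "Suc n \<le> 2 ^ n" using less_exp[of n] by (rule Suc_leI)
        then have "real (Suc n) \<le> real (2 ^ n)" by (simp only: of_nat_le_iff)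
        then have "real n + 1 \<le> 2 ^ n" by simp
        have "log 2 x \<le> log 2 (real n + 1)" using False x by (intro log_mono) auto
        also have "\<dots> \<le> log 2 (2 ^ n)" using \<open>real n + 1 \<le> 2 ^ n\<close> by (intro log_mono) auto
        also have "\<dots> = real n" by (simp add: log_nat_power)
        finally obtain k where "((log 2) ^^ k) (log 2 x) \<le> 1" using Suc.IH by blast
        then have "((log 2) ^^ Suc k) x \<le> 1" by (simp add: funpow_Suc_right del: funpow.simps)
        then show ?thesis by blast
      qed
    qed
  qed
  moreover obtain n :: nat where "x \<le> real n" using real_arch_simple by blast
  ultimately show ?thesis by blast
qed

lemma log_star_spec: "((log 2) ^^ log_star x) x \<le> 1"
  unfolding log_star_def by (rule LeastI_ex) (rule log_star_exists)

lemma log_star_ge1: "x > 1 \<Longrightarrow> log_star x \<ge> 1"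
  using log_star_spec[of x] by (cases "log_star x") auto

lemma tower_beats:
  fixes y :: "nat \<Rightarrow> real"
  assumes step: "\<And>t. 2 powr (y t) \<le> y (Suc t)" and y0: "1 \<le> y 0"
  shows "x \<le> y (log_star x)"
proof -
  define K where "K = log_star x"
  have ypos: "0 < y (Suc t)" for t by (rule less_le_trans[OF _ step[of t]]) simp
  have "t \<le> K \<longrightarrow> ((log 2) ^^ (K - t)) x \<le> y t" for t
  proof (induction t)
    case 0
    then show ?case using log_star_spec[of x] y0 unfolding K_def by simp
  next
    case (Suc t)
    show ?case
    proof
      assume t: "Suc t \<le> K"
      define z where "z = ((log 2) ^^ (K - Suc t)) x"
      have "K - t = Suc (K - Suc t)" using t by simp
      then have "((log 2) ^^ (K - t)) x = log 2 z" unfolding z_def by simp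
      then have lz: "log 2 z \<le> y t" using Suc.IH t by simp
      show "((log 2) ^^ (K - Suc t)) x \<le> y (Suc t)"
      proof (cases "z \<le> 0")
        case True then show ?thesis using ypos[of t] unfolding z_def by simp
      next
        case False
        then have "z = 2 powr (log 2 z)" by simp
        also have "\<dots> \<le> 2 powr (y t)" using lz by simp
        also have "\<dots> \<le> y (Suc t)" by (rule step)
        finally show ?thesis unfolding z_def .
      qed
    qed
  qed
  from this[of K] show ?thesis unfolding K_def by simp
qed

fun tw :: "nat \<Rightarrow> real" where
  "tw 0 = 2"
| "tw (Suc k) = 2 powr tw k"

lemma tw_ge2: "tw k \<ge> 2"
proof (induction k)
  case (Suc k)
  have "(2::real) = 2 powr 1" by simp
  also have "\<dots> \<le> 2 powr tw k" using Suc by (intro powr_mono) auto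
  finally show ?case by simp
qed simp

lemma log_star_ge_tw:
  assumes "x \<ge> tw k"
  shows "log_star x \<ge> Suc k"
proof -
  have "j \<le> k \<longrightarrow> ((log 2) ^^ j) x \<ge> tw (k - j)" for j
  proof (induction j)
    case 0 then show ?case using assms by simp
  next
    case (Suc j)
    show ?case
    proof
      assume j: "Suc j \<le> k"
      then have ih: "((log 2) ^^ j) x \<ge> tw (k - j)" using Suc.IH by simp
      have kj: "k - j = Suc (k - Suc j)" using j by simp
      have pos: "0 < tw (k - Suc j)" using tw_ge2[of "k - Suc j"] by linarith
      have "tw (k - Suc j) = log 2 (tw (k - j))" unfolding kj by simp
      also have "\<dots> \<le> log 2 (((log 2) ^^ j) x)"
        using ih tw_ge2[of "k-j"] by (intro log_mono) auto
      finally show "tw (k - Suc j) \<le> ((log 2) ^^ Suc j) x" by simp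
    qed
  qed
  then have big: "j \<le> k \<Longrightarrow> ((log 2) ^^ j) x > 1" for j
  proof -
    assume "j \<le> k"
    then have "((log 2) ^^ j) x \<ge> tw (k - j)" using \<open>\<And>j. j \<le> k \<longrightarrow> _\<close> by blast
    then show ?thesis using tw_ge2[of "k-j"] by linarith
  qed
  show ?thesis
  proof (rule ccontr)
    assume "\<not> Suc k \<le> log_star x"
    then have "log_star x \<le> k" by simp
    then show False using big[of "log_star x"] log_star_spec[of x] by simp
  qed
qed



fun iterk :: "('a \<Rightarrow> 'a pmf) \<Rightarrow> 'a \<Rightarrow> nat \<Rightarrow> 'a pmf" where
  "iterk f S 0 = return_pmf S"
| "iterk f S (Suc t) = bind_pmf (iterk f S t) f"

lemma realX:
  fixes q r s c :: real and nn :: nat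
  assumes n: "nn \<ge> 1" and q: "0 < q" "q \<le> 1" and r: "r > 0" and c: "c > 0"
    and qn: "q * real nn = c / r" and s: "s \<ge> 0"
  shows "(s / real nn) * (1-q)^nn * (real nn + 1 + 2/q) \<le> s * exp (-c/r) * (2 + 2*r/c)"
proof -
  define n where "n = real nn"
  have n1: "n \<ge> 1" using n unfolding n_def by simp
  have qq: "2 / q = 2 * r * n / c" using qn q r c unfolding n_def[symmetric] by (simp add: field_simps)
  have "(s / n) * (n + 1 + 2/q) = s * (1 + 1/n + 2*r/c)"
    using n1 c unfolding qq by (simp add: field_simps)
  also have "\<dots> \<le> s * (2 + 2*r/c)"
    using s n1 by (intro mult_left_mono) auto
  finally have A: "(s / n) * (n + 1 + 2/q) \<le> s * (2 + 2*r/c)" .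
  have B: "(1-q)^nn \<le> exp (-c/r)"
    using one_minus_pow_le_exp[of q nn] q qn by simp
  have "(s / n) * (1-q)^nn * (n + 1 + 2/q) = (1-q)^nn * ((s / n) * (n + 1 + 2/q))" by simp
  also have "\<dots> \<le> exp (-c/r) * (s * (2 + 2*r/c))"
  proof (rule mult_mono[OF B A])
    show "0 \<le> exp (-c/r)" by simp
    show "0 \<le> (s / n) * (n + 1 + 2/q)" using s n1 q by (intro mult_nonneg_nonneg add_nonneg_nonneg) auto
  qed
  finally show ?thesis unfolding n_def by (simp add: mult_ac)
qed

lemma Markov_pmf:
  fixes f :: "'a \<Rightarrow> real"
  assumes e: "0 < e" and f: "\<And>x. 0 \<le> f x"
  shows "emeasure (measure_pmf M) {x. e \<le> f x} \<le> (\<integral>\<^sup>+x. ennreal (f x) \<partial>M) * ennreal (1/e)"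
proof -
  have "emeasure (measure_pmf M) {x. e \<le> f x} = (\<integral>\<^sup>+x. indicator {x. e \<le> f x} x \<partial>M)" by simp
  also have "\<dots> \<le> (\<integral>\<^sup>+x. ennreal (f x) * ennreal (1/e) \<partial>M)"
  proof (intro nn_integral_mono)
    fix x
    show "indicator {x. e \<le> f x} x \<le> ennreal (f x) * ennreal (1/e)"
    proof (cases "e \<le> f x")
      case True
      then have "1 \<le> f x * (1/e)" using e by (simp add: field_simps)
      then show ?thesis using True e f by (simp add: ennreal_mult'[symmetric])
    qed auto
  qed
  also have "\<dots> = (\<integral>\<^sup>+x. ennreal (f x) \<partial>M) * ennreal (1/e)"
    by (rule nn_integral_multc) simp
  finally show ?thesis .
qed

lemma two_powr_gt: "(x::real) < 2 powr x"
proof (cases "x < 0")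
  case True
  have "0 < 2 powr x" by simp
  then show ?thesis using True by linarith
next
  case False
  define n where "n = nat \<lfloor>x\<rfloor>"
  have "x < real n + 1" unfolding n_def using False by linarith
  also have "real n + 1 \<le> 2 ^ n"
  proof -
    have "Suc n \<le> 2 ^ n" using less_exp[of n] by (rule Suc_leI)
    then have "real (Suc n) \<le> real (2 ^ n)" by (simp only: of_nat_le_iff)
    then show ?thesis by simp
  qed
  also have "(2::real) ^ n = 2 powr (real n)" by (simp add: powr_realpow)
  also have "\<dots> \<le> 2 powr x" unfolding n_def using False by (intro powr_mono) auto
  finally show ?thesis .
qed

context hp begin

definition Lg :: real where "Lg = real (log_star (real p))"

lemma Lg_ge1: "Lg \<ge> 1"
  using log_star_ge1[of "real p"] p2 unfolding Lg_def by simp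

definition R :: "nat set \<Rightarrow> real" where
  "R S = real (card (gamma N p S)) * Lg / (real p * real n0)"

lemma R_nonneg: "R S \<ge> 0"
  unfolding R_def using Lg_ge1 by simp

lemma R_le_Lg: "S \<subseteq> {1..N} \<Longrightarrow> R S \<le> Lg"
proof -
  assume S: "S \<subseteq> {1..N}"
  have "real (card (gamma N p S)) \<le> real p * real n0"
    using card_gamma_le[OF S] real_N by (metis mult.commute of_nat_le_iff)
  then have "real (card (gamma N p S)) * Lg \<le> (real p * real n0) * Lg"
    using Lg_ge1 by (intro mult_right_mono) auto
  then show ?thesis unfolding R_def using p2 n0_pos by (simp add: field_simps)
qed

lemma R_ge_unach: "S \<subseteq> {1..N} \<Longrightarrow> real (card (unachieved N p S)) * Lg / real p \<le> R S"
proof -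
  assume S: "S \<subseteq> {1..N}"
  have "real n0 * real (card (unachieved N p S)) \<le> real (card (gamma N p S))"
    using card_gamma_ge[OF S] by (metis of_nat_le_iff of_nat_mult)
  then have "real n0 * real (card (unachieved N p S)) * Lg \<le> real (card (gamma N p S)) * Lg"
    using Lg_ge1 by (intro mult_right_mono) auto
  then show ?thesis unfolding R_def using p2 n0_pos by (simp add: field_simps)
qed

lemma hp_step_empty: "unachieved N p S = {} \<Longrightarrow> hp_step N p S = return_pmf S"
  unfolding hp_step_def gamma_empty sample_def by (simp add: gamma_empty map_pmf_def bind_return_pmf)

lemma step_support:
  assumes S: "S \<subseteq> {1..N}" and S': "S' \<in> set_pmf (hp_step N p S)"
  shows "S \<subseteq> S' \<and> S' \<subseteq> {1..N}"
proof -
  obtain T where T: "T \<in> set_pmf (sample (gamma N p S) (min 1 (hp_const * real p / (real (card (gamma N p S)) * real (log_star (real p))))))"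
    and "S' = S \<union> T" using S' unfolding hp_step_def by auto
  moreover have "T \<subseteq> gamma N p S" using set_sample[OF finite_gamma[OF S] T] .
  ultimately show ?thesis using gamma_sub[OF S] S by auto
qed

lemma step_R_general:
  assumes S: "S \<subseteq> {1..N}" and U: "unachieved N p S \<noteq> {}"
  shows "(\<integral>\<^sup>+S'. ennreal (R S') \<partial>hp_step N p S)
    \<le> ennreal ((real (card (unachieved N p S)) * Lg / real p) * exp (-hp_const / R S) * (2 + 2 * R S / hp_const))"
proof -
  let ?G = "gamma N p S"
  let ?A = "real (card ?G)"
  let ?U = "real (card (unachieved N p S))"
  define c where "c = hp_const"
  define q where "q = min 1 (c * real p / (?A * Lg))"
  define s where "s = ?U * Lg / real p"
  define \<kappa> where "\<kappa> = Lg / (real p * real n0)"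
  have c0: "c > 0" unfolding c_def using hp_const_pos .
  have Upos: "?U \<ge> 1" using U by (simp add: Suc_leI card_gt_0_iff)
  have Apos: "?A \<ge> 1"
  proof -
    have "real n0 * ?U \<le> ?A" using card_gamma_ge[OF S] by (metis of_nat_le_iff of_nat_mult)
    moreover have "1 * 1 \<le> real n0 * ?U" using Upos n0_pos by (intro mult_mono) auto
    ultimately show ?thesis by simp
  qed
  have q0: "0 < q" "q \<le> 1" unfolding q_def using c0 Apos Lg_ge1 p2 by auto
  have k0: "\<kappa> \<ge> 0" unfolding \<kappa>_def using Lg_ge1 by simp
  have stepq: "hp_step N p S = map_pmf (\<lambda>T. S \<union> T) (sample ?G q)"
    unfolding hp_step_def q_def c_def Lg_def ..
  have "(\<integral>\<^sup>+S'. ennreal (R S') \<partial>hp_step N p S) = (\<integral>\<^sup>+T. of_nat (card (gamma N p (S \<union> T))) * ennreal \<kappa> \<partial>sample ?G q)"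
  proof -
    have pw: "ennreal (R (S \<union> T)) = of_nat (card (gamma N p (S \<union> T))) * ennreal \<kappa>" for T
    proof -
      have "R (S \<union> T) = real (card (gamma N p (S \<union> T))) * \<kappa>" unfolding R_def \<kappa>_def by simp
      then show ?thesis using k0 by (simp add: ennreal_mult ennreal_of_nat_eq_real_of_nat)
    qed
    show ?thesis unfolding stepq by (simp add: pw)
  qed
  also have "\<dots> = (\<integral>\<^sup>+T. of_nat (card (gamma N p (S \<union> T))) \<partial>sample ?G q) * ennreal \<kappa>"
    by (rule nn_integral_multc) simp
  also have "\<dots> \<le> ennreal (?U * ((1-q)^n0 * (real n0 + 1 + 2/q))) * ennreal \<kappa>"
    by (intro mult_right_mono step_card_bound[OF S q0]) simp
  also have "\<dots> = ennreal (\<kappa> * ?U * (1-q)^n0 * (real n0 + 1 + 2/q))"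
    using k0 q0 by (simp add: ennreal_mult''[symmetric] mult_ac)
  also have "\<dots> \<le> ennreal (s * exp (-c / R S) * (2 + 2 * R S / c))"
  proof (intro ennreal_leI)
    have kU: "\<kappa> * ?U = s / real n0" unfolding \<kappa>_def s_def using p2 n0_pos by (simp add: field_simps)
    have rpos: "R S > 0" unfolding R_def using Apos Lg_ge1 p2 n0_pos by simp
    have spos: "s \<ge> 0" unfolding s_def using Lg_ge1 by simp
    show "\<kappa> * ?U * (1-q)^n0 * (real n0 + 1 + 2/q) \<le> s * exp (-c / R S) * (2 + 2 * R S / c)"
    proof (cases "q = 1")
      case True
      have z: "(1-q)^n0 = 0" using True n0_pos by simp
      have "0 \<le> s * exp (-c / R S) * (2 + 2 * R S / c)"
        using spos rpos c0 by (intro mult_nonneg_nonneg add_nonneg_nonneg) auto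
      then show ?thesis unfolding z by simp
    next
      case False
      then have qv: "q = c * real p / (?A * Lg)" unfolding q_def by (simp add: min_def split: if_splits)
      have qn: "q * real n0 = c / R S"
        unfolding qv R_def using p2 n0_pos Apos Lg_ge1 by (simp add: field_simps)
      show ?thesis unfolding kU using realX[OF n0_pos q0 rpos c0 qn spos] by simp
    qed
  qed
  finally show ?thesis unfolding s_def c_def .
qed

end

fun xseq :: "real \<Rightarrow> nat \<Rightarrow> real" where
  "xseq a 0 = a"
| "xseq a (Suc t) = 2 powr xseq a t"

lemma xseq_Suc_gt: "xseq a t < xseq a (Suc t)"
  using two_powr_gt by simp

lemma xseq_mono: "t \<le> t' \<Longrightarrow> xseq a t \<le> xseq a t'"
proof -
  assume tt: "t \<le> t'"
  have "\<And>n. xseq a n \<le> xseq a (Suc n)" using xseq_Suc_gt less_imp_le by blast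
  from lift_Suc_mono_le[of "xseq a", OF this tt] show ?thesis .
qed

lemma xseq_ge: "a \<le> xseq a t"
  using xseq_mono[of 0 t a] by simp

lemma tower_num:
  fixes x W c :: real
  assumes x: "x \<ge> 1" and W: "W > 0" and ex: "exp x \<ge> 3 * W" and c: "c - ln 2 \<ge> 1"
  shows "3 * (1/x) * exp (-c/(1/x)) / (1 / (2 powr x)) \<le> 1 / W"
proof -
  have "3 * (1/x) * exp (-c/(1/x)) / (1 / (2 powr x)) = 3 * exp (-(c - ln 2) * x) / x"
    using x by (simp add: powr_def exp_diff field_simps exp_minus_inverse flip: exp_add)
  also have "\<dots> \<le> 3 * exp (-(c - ln 2) * x)"
    using x by (simp add: divide_le_eq)
  also have "\<dots> \<le> 3 * exp (- x)"
  proof -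
    have "(c - ln 2) * x \<ge> 1 * x" using c x by (intro mult_right_mono) auto
    moreover have "(-(c - ln 2)) * x = -((c - ln 2) * x)" by (rule mult_minus_left)
    ultimately have "(-(c - ln 2)) * x \<le> -x" by linarith
    then show ?thesis by simp
  qed
  also have "\<dots> = 3 / exp x" by (simp add: exp_minus field_simps)
  also have "\<dots> \<le> 3 / (3 * W)" using W ex by (intro divide_left_mono) auto
  also have "\<dots> = 1 / W" by simp
  finally show ?thesis .
qed

context hp begin

abbreviation "step \<equiv> hp_step N p"

lemma R_pos: "S \<subseteq> {1..N} \<Longrightarrow> unachieved N p S \<noteq> {} \<Longrightarrow> R S \<ge> Lg / real p"
proof -
  assume S: "S \<subseteq> {1..N}" and U: "unachieved N p S \<noteq> {}"
  have "1 \<le> real (card (unachieved N p S))" using U by (simp add: Suc_leI card_gt_0_iff)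
  then have "Lg / real p \<le> real (card (unachieved N p S)) * Lg / real p"
    using Lg_ge1 p2 by (simp add: divide_right_mono)
  also have "\<dots> \<le> R S" by (rule R_ge_unach[OF S])
  finally show ?thesis .
qed

lemma R_empty: "unachieved N p S = {} \<Longrightarrow> R S = 0"
  unfolding R_def by (simp add: gamma_empty)

lemma R_pos': "S \<subseteq> {1..N} \<Longrightarrow> unachieved N p S \<noteq> {} \<Longrightarrow> R S > 0"
proof -
  assume "S \<subseteq> {1..N}" "unachieved N p S \<noteq> {}"
  then have "R S \<ge> Lg / real p" by (rule R_pos)
  moreover have "Lg / real p > 0" using Lg_ge1 p2 by simp
  ultimately show ?thesis by linarith
qed

lemma step_PA:
  assumes S: "S \<subseteq> {1..N}" and U: "real (card (unachieved N p S)) * Lg \<le> real p"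
  shows "(\<integral>\<^sup>+S'. ennreal (R S') \<partial>step S) \<le> ennreal ((2/hp_const) * R S)"
proof (cases "unachieved N p S = {}")
  case True
  then show ?thesis by (simp add: hp_step_empty R_empty)
next
  case False
  have "(\<integral>\<^sup>+S'. ennreal (R S') \<partial>step S) \<le> ennreal ((real (card (unachieved N p S)) * Lg / real p) * exp (-hp_const / R S) * (2 + 2 * R S / hp_const))"
    by (rule step_R_general[OF S False])
  also have "\<dots> \<le> ennreal ((2/hp_const) * R S)"
  proof (intro ennreal_leI realB)
    show "real (card (unachieved N p S)) * Lg / real p \<le> 1" using U p2 by simp
    show "0 \<le> real (card (unachieved N p S)) * Lg / real p" using Lg_ge1 by simp
    show "0 < R S" by (rule R_pos'[OF S False])
    show "0 < hp_const" by (rule hp_const_pos)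
  qed
  finally show ?thesis .
qed

lemma step_PT:
  assumes S: "S \<subseteq> {1..N}" and e: "R S \<le> e" "e \<le> 1"
  shows "(\<integral>\<^sup>+S'. ennreal (R S') \<partial>step S) \<le> ennreal (3 * e * exp (-hp_const / e))"
proof (cases "unachieved N p S = {}")
  case True
  then show ?thesis by (simp add: hp_step_empty R_empty)
next
  case False
  have "(\<integral>\<^sup>+S'. ennreal (R S') \<partial>step S) \<le> ennreal ((real (card (unachieved N p S)) * Lg / real p) * exp (-hp_const / R S) * (2 + 2 * R S / hp_const))"
    by (rule step_R_general[OF S False])
  also have "\<dots> \<le> ennreal (3 * e * exp (-hp_const / e))"
  proof (intro ennreal_leI realC)
    show "real (card (unachieved N p S)) * Lg / real p \<le> R S" by (rule R_ge_unach[OF S])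
    show "0 \<le> real (card (unachieved N p S)) * Lg / real p" using Lg_ge1 by simp
    show "0 < R S" by (rule R_pos'[OF S False])
    show "R S \<le> e" "e \<le> 1" by (fact e)+
    show "2 \<le> hp_const" using hp_const_ge by simp
  qed
  finally show ?thesis .
qed

lemma iter_support:
  assumes S: "S \<subseteq> {1..N}"
  shows "S' \<in> set_pmf (iterk step S t) \<Longrightarrow> S \<subseteq> S' \<and> S' \<subseteq> {1..N}"
proof (induction t arbitrary: S')
  case 0 then show ?case using S by simp
next
  case (Suc t)
  then obtain S1 where S1: "S1 \<in> set_pmf (iterk step S t)" "S' \<in> set_pmf (step S1)" by auto
  then have "S \<subseteq> S1 \<and> S1 \<subseteq> {1..N}" using Suc.IH by blast
  then show ?case using step_support[OF _ S1(2)] by blast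
qed

lemma iter_PA:
  assumes S: "S \<subseteq> {1..N}" and U: "real (card (unachieved N p S)) * Lg \<le> real p"
  shows "(\<integral>\<^sup>+S'. ennreal (R S') \<partial>iterk step S t) \<le> ennreal ((2/hp_const)^t * R S)"
proof (induction t)
  case 0 then show ?case by simp
next
  case (Suc t)
  have "(\<integral>\<^sup>+S'. ennreal (R S') \<partial>iterk step S (Suc t)) = (\<integral>\<^sup>+S1. (\<integral>\<^sup>+S'. ennreal (R S') \<partial>step S1) \<partial>iterk step S t)"
    by simp
  also have "\<dots> \<le> (\<integral>\<^sup>+S1. ennreal (2/hp_const) * ennreal (R S1) \<partial>iterk step S t)"
  proof (intro nn_integral_mono_AE AE_pmfI)
    fix S1 assume S1: "S1 \<in> set_pmf (iterk step S t)"
    have sup: "S \<subseteq> S1" "S1 \<subseteq> {1..N}" using iter_support[OF S S1] by auto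
    have "card (unachieved N p S1) \<le> card (unachieved N p S)"
      using unach_mono[OF sup(1)] by (intro card_mono) auto
    then have "real (card (unachieved N p S1)) * Lg \<le> real (card (unachieved N p S)) * Lg"
      using Lg_ge1 by (intro mult_right_mono) auto
    then have "real (card (unachieved N p S1)) * Lg \<le> real p" using U by linarith
    moreover have "ennreal (2/hp_const) * ennreal (R S1) = ennreal ((2/hp_const) * R S1)"
      by (rule ennreal_mult[symmetric]) (use hp_const_pos R_nonneg[of S1] in auto)
    ultimately show "(\<integral>\<^sup>+S'. ennreal (R S') \<partial>step S1) \<le> ennreal (2/hp_const) * ennreal (R S1)"
      using step_PA[OF sup(2)] by simp
  qed
  also have "\<dots> = ennreal (2/hp_const) * (\<integral>\<^sup>+S1. ennreal (R S1) \<partial>iterk step S t)"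
    by (rule nn_integral_cmult) simp
  also have "\<dots> \<le> ennreal (2/hp_const) * ennreal ((2/hp_const)^t * R S)"
    by (intro mult_left_mono Suc.IH) simp
  also have "\<dots> = ennreal ((2/hp_const)^(Suc t) * R S)"
    using hp_const_pos R_nonneg by (simp add: ennreal_mult[symmetric] mult_ac)
  finally show ?case .
qed

lemma tower_step:
  assumes M: "\<And>S. S \<in> set_pmf M \<Longrightarrow> S \<subseteq> {1..N}" and e: "0 < e" "e \<le> 1" and e': "0 < e'"
  shows "emeasure (measure_pmf (bind_pmf M step)) {S. e' < R S}
     \<le> emeasure (measure_pmf M) {S. e < R S} + ennreal (3 * e * exp (-hp_const / e) / e')"
proof -
  define B where "B = 3 * e * exp (-hp_const / e) / e'"
  have B0: "B \<ge> 0" unfolding B_def using e e' by simp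
  have "emeasure (measure_pmf (bind_pmf M step)) {S. e' < R S}
      = (\<integral>\<^sup>+S. emeasure (measure_pmf (step S)) {S. e' < R S} \<partial>M)" by simp
  also have "\<dots> \<le> (\<integral>\<^sup>+S. indicator {S. e < R S} S + ennreal B \<partial>M)"
  proof (intro nn_integral_mono_AE AE_pmfI)
    fix S assume S: "S \<in> set_pmf M"
    show "emeasure (measure_pmf (step S)) {S. e' < R S} \<le> indicator {S. e < R S} S + ennreal B"
    proof (cases "e < R S")
      case True
      have "emeasure (measure_pmf (step S)) {S. e' < R S} \<le> 1" by (rule measure_pmf.emeasure_le_1)
      also have "\<dots> \<le> indicator {S. e < R S} S + ennreal B" using True by simp
      finally show ?thesis .
    next
      case False
      have "emeasure (measure_pmf (step S)) {S. e' < R S} \<le> emeasure (measure_pmf (step S)) {S. e' \<le> R S}"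
        by (intro emeasure_mono) auto
      also have "\<dots> \<le> (\<integral>\<^sup>+S'. ennreal (R S') \<partial>step S) * ennreal (1/e')"
        by (rule Markov_pmf[OF e' R_nonneg])
      also have "\<dots> \<le> ennreal (3 * e * exp (-hp_const / e)) * ennreal (1/e')"
        using False e by (intro mult_right_mono step_PT[OF M[OF S]]) auto
      also have "\<dots> = ennreal B" unfolding B_def using e e' by (simp add: ennreal_mult[symmetric])
      also have "\<dots> \<le> indicator {S. e < R S} S + ennreal B" by simp
      finally show ?thesis .
    qed
  qed
  also have "\<dots> = emeasure (measure_pmf M) {S. e < R S} + ennreal B"
    by (subst nn_integral_add) auto
  finally show ?thesis unfolding B_def .
qed

end

context hp begin

lemma chain:
  assumes S: "S \<subseteq> {1..N}" and a: "a \<ge> 1" and W: "W > 0" and ea: "exp a \<ge> 3 * W"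
  shows "emeasure (measure_pmf (iterk step S (T1 + t))) {S'. 1 / xseq a t < R S'}
     \<le> emeasure (measure_pmf (iterk step S T1)) {S'. 1 / a < R S'} + of_nat t * ennreal (1 / W)"
proof (induction t)
  case 0 then show ?case by simp
next
  case (Suc t)
  let ?M = "iterk step S (T1 + t)"
  have x1: "xseq a t \<ge> 1" using xseq_ge[of a t] a by linarith
  have M: "\<And>S'. S' \<in> set_pmf ?M \<Longrightarrow> S' \<subseteq> {1..N}" using iter_support[OF S] by blast
  have e: "0 < 1 / xseq a t" "1 / xseq a t \<le> 1" using x1 by auto
  have e': "0 < 1 / xseq a (Suc t)" using xseq_ge[of a "Suc t"] a by simp
  have "emeasure (measure_pmf (iterk step S (T1 + Suc t))) {S'. 1 / xseq a (Suc t) < R S'}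
      = emeasure (measure_pmf (bind_pmf ?M step)) {S'. 1 / xseq a (Suc t) < R S'}" by simp
  also have "\<dots> \<le> emeasure (measure_pmf ?M) {S'. 1 / xseq a t < R S'}
      + ennreal (3 * (1 / xseq a t) * exp (-hp_const / (1 / xseq a t)) / (1 / xseq a (Suc t)))"
    by (rule tower_step[OF M e e'])
  also have "\<dots> \<le> (emeasure (measure_pmf (iterk step S T1)) {S'. 1 / a < R S'} + of_nat t * ennreal (1 / W)) + ennreal (1 / W)"
  proof (intro add_mono Suc.IH ennreal_leI)
    have "exp (xseq a t) \<ge> exp a" using xseq_ge[of a t] by simp
    then have "exp (xseq a t) \<ge> 3 * W" using ea by linarith
    from tower_num[OF x1 W this hp_const_ln2]
    show "3 * (1 / xseq a t) * exp (-hp_const / (1 / xseq a t)) / (1 / xseq a (Suc t)) \<le> 1 / W" by simp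
  qed
  also have "\<dots> = emeasure (measure_pmf (iterk step S T1)) {S'. 1 / a < R S'} + of_nat (Suc t) * ennreal (1 / W)"
    by (simp add: algebra_simps)
  finally show ?case .
qed

definition L :: nat where "L = log_star (real p)"
definition aa :: real where "aa = 1 + ln (3 * Lg^2)"
definition \<delta>0 :: real where "\<delta>0 = (5/6)^L * Lg * aa + 2 / Lg"

lemma Lg_L: "Lg = real L" unfolding Lg_def L_def ..

lemma core:
  assumes S: "S \<subseteq> {1..N}" and U: "real (card (unachieved N p S)) * Lg \<le> real p"
  shows "measure_pmf.prob (iterk step S (3 * L)) {S'. unachieved N p S' = {}} \<ge> 1 - \<delta>0"
proof -
  define W where "W = Lg^2"
  have W: "W > 0" unfolding W_def using Lg_ge1 by simp
  have "1 * 1 \<le> Lg * Lg" using Lg_ge1 by (intro mult_mono) auto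
  then have W1: "3 * W \<ge> 1" unfolding W_def by (simp add: power2_eq_square)
  have a1: "aa \<ge> 1" unfolding aa_def using W1 unfolding W_def by simp
  have ea: "exp aa \<ge> 3 * W"
  proof -
    have "exp aa = exp 1 * (3 * W)" unfolding aa_def W_def using W unfolding W_def by (simp add: exp_add)
    moreover have "exp (1::real) \<ge> 1" by simp
    ultimately show ?thesis using W by (metis mult_right_mono mult_1 less_imp_le mult_pos_pos zero_less_numeral)
  qed
  have L1: "L \<ge> 1" using Lg_ge1 Lg_L by simp
  have E1: "emeasure (measure_pmf (iterk step S L)) {S'. 1 / aa < R S'} \<le> ennreal ((5/6)^L * Lg * aa)"
  proof -
    have "emeasure (measure_pmf (iterk step S L)) {S'. 1 / aa < R S'} \<le> emeasure (measure_pmf (iterk step S L)) {S'. 1 / aa \<le> R S'}"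
      by (intro emeasure_mono) auto
    also have "\<dots> \<le> (\<integral>\<^sup>+S'. ennreal (R S') \<partial>iterk step S L) * ennreal aa"
      using Markov_pmf[of "1/aa" R "iterk step S L"] a1 R_nonneg by simp
    also have "\<dots> \<le> ennreal ((2/hp_const)^L * R S) * ennreal aa"
      using a1 by (intro mult_right_mono iter_PA[OF S U]) auto
    also have "\<dots> \<le> ennreal ((5/6)^L * Lg * aa)"
    proof -
      have c: "0 \<le> 2 / hp_const" "2 / hp_const \<le> 5/6" using hp_const_ge hp_const_pos by (auto simp: field_simps)
      have "(2/hp_const)^L \<le> (5/6)^L" using c by (intro power_mono) auto
      moreover have "R S \<le> Lg" by (rule R_le_Lg[OF S])
      ultimately have "(2/hp_const)^L * R S \<le> (5/6)^L * Lg"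
        using c R_nonneg by (intro mult_mono) auto
      then have h: "(2/hp_const)^L * R S * aa \<le> (5/6)^L * Lg * aa"
        using a1 by (intro mult_right_mono) auto
      have "ennreal ((2/hp_const)^L * R S) * ennreal aa = ennreal ((2/hp_const)^L * R S * aa)"
        by (rule ennreal_mult[symmetric]) (use a1 c R_nonneg in auto)
      then show ?thesis using ennreal_leI[OF h] by simp
    qed
    finally show ?thesis .
  qed
  have E2: "emeasure (measure_pmf (iterk step S (L + 2 * L))) {S'. 1 / xseq aa (2 * L) < R S'}
      \<le> ennreal ((5/6)^L * Lg * aa) + ennreal (2 / Lg)"
  proof -
    have "emeasure (measure_pmf (iterk step S (L + 2 * L))) {S'. 1 / xseq aa (2 * L) < R S'}
      \<le> emeasure (measure_pmf (iterk step S L)) {S'. 1 / aa < R S'} + of_nat (2 * L) * ennreal (1 / W)"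
      by (rule chain[OF S a1 W ea])
    also have "of_nat (2 * L) * ennreal (1 / W) = ennreal (2 / Lg)"
    proof -
      have "real (2 * L) * (1 / W) = 2 / Lg" unfolding W_def Lg_L using L1 by (simp add: power2_eq_square)
      then show ?thesis using W by (metis ennreal_mult'' ennreal_of_nat_eq_real_of_nat less_imp_le zero_le_divide_1_iff)
    qed
    finally show ?thesis using E1 by (meson add_mono order.trans order_refl)
  qed
  have xbig: "real p < xseq aa (2 * L)"
  proof -
    have "real p \<le> xseq aa (log_star (real p))"
      by (rule tower_beats) (use a1 in simp_all)
    also have "\<dots> = xseq aa L" unfolding L_def ..
    also have "\<dots> < xseq aa (Suc L)" by (rule xseq_Suc_gt)
    also have "\<dots> \<le> xseq aa (2 * L)" using L1 by (intro xseq_mono) simp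
    finally show ?thesis .
  qed
  have E3: "emeasure (measure_pmf (iterk step S (3 * L))) {S'. unachieved N p S' \<noteq> {}}
      \<le> emeasure (measure_pmf (iterk step S (L + 2 * L))) {S'. 1 / xseq aa (2 * L) < R S'}"
  proof -
    let ?M = "iterk step S (3 * L)"
    have eq: "3 * L = L + 2 * L" by simp
    have "emeasure (measure_pmf ?M) {S'. unachieved N p S' \<noteq> {}} = emeasure (measure_pmf ?M) ({S'. unachieved N p S' \<noteq> {}} \<inter> set_pmf ?M)"
      by (simp add: emeasure_Int_set_pmf)
    also have "\<dots> \<le> emeasure (measure_pmf ?M) {S'. 1 / xseq aa (2 * L) < R S'}"
    proof (intro emeasure_mono subsetI)
      fix S' assume "S' \<in> {S'. unachieved N p S' \<noteq> {}} \<inter> set_pmf ?M"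
      then have ne: "unachieved N p S' \<noteq> {}" and sup: "S' \<subseteq> {1..N}" using iter_support[OF S] by auto
      have "1 / xseq aa (2 * L) < 1 / real p" using xbig p2 by (intro divide_strict_left_mono) auto
      also have "\<dots> \<le> Lg / real p" using Lg_ge1 p2 by (intro divide_right_mono) auto
      also have "\<dots> \<le> R S'" by (rule R_pos[OF sup ne])
      finally show "S' \<in> {S'. 1 / xseq aa (2 * L) < R S'}" by simp
    qed simp
    finally show ?thesis unfolding eq .
  qed
  have "emeasure (measure_pmf (iterk step S (3 * L))) {S'. unachieved N p S' \<noteq> {}} \<le> ennreal \<delta>0"
  proof -
    have "ennreal ((5/6)^L * Lg * aa) + ennreal (2 / Lg) = ennreal \<delta>0"
      unfolding \<delta>0_def using a1 Lg_ge1 by (simp add: ennreal_plus)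
    then show ?thesis using E2 E3 by simp
  qed
  then have "ennreal (measure_pmf.prob (iterk step S (3 * L)) {S'. unachieved N p S' \<noteq> {}}) \<le> ennreal \<delta>0"
    by (simp add: measure_pmf.emeasure_eq_measure)
  moreover have "\<delta>0 \<ge> 0" unfolding \<delta>0_def using a1 Lg_ge1 by simp
  ultimately have "measure_pmf.prob (iterk step S (3 * L)) {S'. unachieved N p S' \<noteq> {}} \<le> \<delta>0"
    by (simp add: ennreal_le_iff)
  moreover have "measure_pmf.prob (iterk step S (3 * L)) {S'. unachieved N p S' = {}}
      = 1 - measure_pmf.prob (iterk step S (3 * L)) {S'. unachieved N p S' \<noteq> {}}"
  proof -
    have "{S'. unachieved N p S' = {}} = UNIV - {S'. unachieved N p S' \<noteq> {}}" by auto
    then show ?thesis using measure_pmf.prob_compl[of "{S'. unachieved N p S' \<noteq> {}}" "iterk step S (3 * L)"] by simp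
  qed
  ultimately show ?thesis by simp
qed

end

fun tr :: "('a \<Rightarrow> 'a pmf) \<Rightarrow> 'a \<Rightarrow> nat \<Rightarrow> 'a list pmf" where
  "tr f S 0 = return_pmf [S]"
| "tr f S (Suc n) = bind_pmf (tr f S n) (\<lambda>xs. map_pmf (\<lambda>T. xs @ [T]) (f (last xs)))"

lemma hp_traj_tr: "hp_traj N p n = tr (hp_step N p) {} n"
  by (induction n) simp_all

lemma tr_len: "xs \<in> set_pmf (tr f S n) \<Longrightarrow> length xs = Suc n \<and> xs ! 0 = S"
proof (induction n arbitrary: xs)
  case 0 then show ?case by simp
next
  case (Suc n)
  from Suc.prems obtain ys T where ys: "ys \<in> set_pmf (tr f S n)" and xs: "xs = ys @ [T]" by auto
  have "length ys = Suc n \<and> ys ! 0 = S" by (rule Suc.IH[OF ys])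
  then show ?case using xs by (simp add: nth_append)
qed

lemma tr_forward: "tr f S (Suc n) = bind_pmf (f S) (\<lambda>T. map_pmf ((#) S) (tr f T n))"
proof (induction n)
  case 0
  show ?case by (simp add: bind_return_pmf map_pmf_def)
next
  case (Suc n)
  define G where "G = (\<lambda>xs. map_pmf (\<lambda>T. xs @ [T]) (f (last xs)))"
  have "tr f S (Suc (Suc n)) = bind_pmf (tr f S (Suc n)) G" unfolding G_def by simp
  also have "\<dots> = bind_pmf (f S) (\<lambda>T. bind_pmf (map_pmf ((#) S) (tr f T n)) G)"
    unfolding Suc.IH by (simp add: bind_assoc_pmf)
  also have "\<dots> = bind_pmf (f S) (\<lambda>T. bind_pmf (tr f T n) (\<lambda>ys. map_pmf ((#) S) (G ys)))"
  proof (rule bind_pmf_cong[OF refl])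
    fix T
    show "bind_pmf (map_pmf ((#) S) (tr f T n)) G = bind_pmf (tr f T n) (\<lambda>ys. map_pmf ((#) S) (G ys))"
      unfolding bind_map_pmf
    proof (rule bind_pmf_cong[OF refl])
      fix ys assume "ys \<in> set_pmf (tr f T n)"
      then have "ys \<noteq> []" using tr_len[of ys f T n] by auto
      then show "G (S # ys) = map_pmf ((#) S) (G ys)" unfolding G_def by (simp add: map_pmf_comp)
    qed
  qed
  also have "\<dots> = bind_pmf (f S) (\<lambda>T. map_pmf ((#) S) (tr f T (Suc n)))"
    unfolding G_def by (simp add: map_bind_pmf)
  finally show ?case .
qed

lemma tr_nth: "k \<le> m \<Longrightarrow> map_pmf (\<lambda>xs. xs ! k) (tr f S m) = iterk f S k"
proof (induction m arbitrary: k)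
  case 0 then show ?case by simp
next
  case (Suc m)
  show ?case
  proof (cases "k \<le> m")
    case True
    have "map_pmf (\<lambda>xs. xs ! k) (tr f S (Suc m)) = bind_pmf (tr f S m) (\<lambda>ys. map_pmf (\<lambda>T. (ys @ [T]) ! k) (f (last ys)))"
      by (simp add: map_bind_pmf map_pmf_comp)
    also have "\<dots> = bind_pmf (tr f S m) (\<lambda>ys. return_pmf (ys ! k))"
    proof (rule bind_pmf_cong[OF refl])
      fix ys assume "ys \<in> set_pmf (tr f S m)"
      then have "length ys = Suc m" using tr_len[of ys f S m] by simp
      then have "\<And>T. (ys @ [T]) ! k = ys ! k" using True by (simp add: nth_append)
      then show "map_pmf (\<lambda>T. (ys @ [T]) ! k) (f (last ys)) = return_pmf (ys ! k)" by simp
    qed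
    also have "\<dots> = map_pmf (\<lambda>xs. xs ! k) (tr f S m)" by (simp add: map_pmf_def)
    also have "\<dots> = iterk f S k" using Suc.IH True by simp
    finally show ?thesis .
  next
    case False
    then have k: "k = Suc m" using Suc.prems by simp
    have "map_pmf (\<lambda>xs. xs ! k) (tr f S (Suc m)) = bind_pmf (tr f S m) (\<lambda>ys. map_pmf (\<lambda>T. (ys @ [T]) ! k) (f (last ys)))"
      by (simp add: map_bind_pmf map_pmf_comp)
    also have "\<dots> = bind_pmf (tr f S m) (\<lambda>ys. f (ys ! m))"
    proof (rule bind_pmf_cong[OF refl])
      fix ys assume "ys \<in> set_pmf (tr f S m)"
      then have l: "length ys = Suc m" using tr_len[of ys f S m] by simp
      then have "\<And>T. (ys @ [T]) ! k = T" using k by (simp add: nth_append)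
      moreover have "last ys = ys ! m"
      proof -
        have "ys \<noteq> []" using l by auto
        then show ?thesis using l by (simp add: last_conv_nth)
      qed
      ultimately show "map_pmf (\<lambda>T. (ys @ [T]) ! k) (f (last ys)) = f (ys ! m)" by simp
    qed
    also have "\<dots> = bind_pmf (map_pmf (\<lambda>xs. xs ! m) (tr f S m)) f" by (simp add: bind_map_pmf)
    also have "\<dots> = iterk f S k" using Suc.IH[of m] k by simp
    finally show ?thesis .
  qed
qed

context hp begin

lemma tr_support:
  assumes S: "S \<subseteq> {1..N}"
  shows "xs \<in> set_pmf (tr step S m) \<Longrightarrow> (\<forall>i\<le>m. xs ! i \<subseteq> {1..N}) \<and> (\<forall>i j. i \<le> j \<longrightarrow> j \<le> m \<longrightarrow> xs ! i \<subseteq> xs ! j)"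
proof (induction m arbitrary: xs)
  case 0 then show ?case using S by simp
next
  case (Suc m)
  then obtain ys T where ys: "ys \<in> set_pmf (tr step S m)" and T: "T \<in> set_pmf (step (last ys))" and xs: "xs = ys @ [T]" by auto
  have l: "length ys = Suc m" using tr_len[OF ys] by simp
  have IH: "\<forall>i\<le>m. ys ! i \<subseteq> {1..N}" "\<forall>i j. i \<le> j \<longrightarrow> j \<le> m \<longrightarrow> ys ! i \<subseteq> ys ! j" using Suc.IH[OF ys] by auto
  have last: "last ys = ys ! m"
  proof -
    have "ys \<noteq> []" using l by auto
    then show ?thesis using l by (simp add: last_conv_nth)
  qed
  have sT: "ys ! m \<subseteq> T \<and> T \<subseteq> {1..N}" using step_support[of "ys ! m" T] IH(1) T last by auto
  have nth: "xs ! i = (if i \<le> m then ys ! i else T)" if "i \<le> Suc m" for i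
    using that l xs by (auto simp: nth_append)
  show ?case
  proof (intro conjI allI impI)
    fix i assume "i \<le> Suc m"
    then show "xs ! i \<subseteq> {1..N}" using nth IH(1) sT by auto
  next
    fix i j assume ij: "i \<le> j" "j \<le> Suc m"
    show "xs ! i \<subseteq> xs ! j"
    proof (cases "j \<le> m")
      case True then show ?thesis using nth ij IH(2) by auto
    next
      case False
      then have xj: "xs ! j = T" using nth ij by auto
      show ?thesis
      proof (cases "i \<le> m")
        case True
        then have "xs ! i = ys ! i" using nth ij by auto
        moreover have "ys ! i \<subseteq> ys ! m" using IH(2) True by auto
        ultimately show ?thesis using sT xj by auto
      next
        case False
        then have "xs ! i = T" using nth ij by auto
        then show ?thesis using xj by simp
      qed
    qed
  qed
qed

end

lemma log_star_tendsto: "filterlim (\<lambda>p::nat. real (log_star (real p))) at_top sequentially"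
proof (subst filterlim_at_top, intro allI)
  fix Z :: real
  define k where "k = nat \<lceil>Z\<rceil>"
  have ev: "eventually (\<lambda>p::nat. real p \<ge> tw k) sequentially"
  proof -
    obtain m :: nat where "tw k \<le> real m" using real_arch_simple by blast
    then show ?thesis unfolding eventually_sequentially by (intro exI[of _ m]) auto
  qed
  show "eventually (\<lambda>p::nat. Z \<le> real (log_star (real p))) sequentially"
    using ev
  proof (rule eventually_mono)
    fix p :: nat assume "real p \<ge> tw k"
    then have "log_star (real p) \<ge> Suc k" by (rule log_star_ge_tw)
    then have "real (log_star (real p)) \<ge> real k + 1" by simp
    moreover have "Z \<le> real k" unfolding k_def by linarith
    ultimately show "Z \<le> real (log_star (real p))" by linarith
  qed
qed

definition hfun :: "real \<Rightarrow> real" where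
  "hfun x = (5/6) powr x * x * (1 + ln (3 * x^2)) + 2 / x"

context hp begin

definition Gd :: "nat set \<Rightarrow> bool" where
  "Gd S \<longleftrightarrow> real (card (unachieved N p S)) \<le> real p / Lg"

definition Bad :: "nat \<Rightarrow> nat \<Rightarrow> nat set list \<Rightarrow> bool" where
  "Bad K n xs \<longleftrightarrow> (\<exists>j\<le>n. Gd (xs ! j) \<and> unachieved N p (xs ! (j + K)) \<noteq> {})"

lemma Gd_imp: "Gd S \<Longrightarrow> real (card (unachieved N p S)) * Lg \<le> real p"
  unfolding Gd_def using Lg_ge1 by (simp add: field_simps)

lemma core_em:
  assumes S: "S \<subseteq> {1..N}" and G: "Gd S"
  shows "emeasure (measure_pmf (iterk step S (3 * L))) {S'. unachieved N p S' \<noteq> {}} \<le> ennreal \<delta>0"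
proof -
  let ?M = "iterk step S (3 * L)"
  have c: "measure_pmf.prob ?M {S'. unachieved N p S' = {}} \<ge> 1 - \<delta>0" by (rule core[OF S Gd_imp[OF G]])
  have "{S'. unachieved N p S' \<noteq> {}} = UNIV - {S'. unachieved N p S' = {}}" by auto
  then have "measure_pmf.prob ?M {S'. unachieved N p S' \<noteq> {}} = 1 - measure_pmf.prob ?M {S'. unachieved N p S' = {}}"
    using measure_pmf.prob_compl[of "{S'. unachieved N p S' = {}}" ?M] by simp
  then have "measure_pmf.prob ?M {S'. unachieved N p S' \<noteq> {}} \<le> \<delta>0" using c by linarith
  then show ?thesis by (simp add: measure_pmf.emeasure_eq_measure ennreal_leI)
qed

lemma delta0_nonneg: "\<delta>0 \<ge> 0"
proof -
  have "1 * 1 \<le> Lg * Lg" using Lg_ge1 by (intro mult_mono) auto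
  then have "3 * Lg^2 \<ge> 1" by (simp add: power2_eq_square)
  then have "aa \<ge> 0" unfolding aa_def by simp
  then show ?thesis unfolding \<delta>0_def using Lg_ge1 by simp
qed

lemma main_induct:
  "S \<subseteq> {1..N} \<Longrightarrow> emeasure (measure_pmf (tr step S (n + 3 * L))) {xs. Bad (3 * L) n xs} \<le> ennreal \<delta>0"
proof (induction n arbitrary: S)
  case 0
  note S = "0.prems"
  show ?case
  proof (cases "Gd S")
    case True
    let ?K = "3 * L"
    let ?M = "tr step S (0 + ?K)"
    have "emeasure (measure_pmf ?M) {xs. Bad ?K 0 xs} \<le> emeasure (measure_pmf ?M) {xs. unachieved N p (xs ! ?K) \<noteq> {}}"
      by (intro emeasure_mono) (auto simp: Bad_def)
    also have "\<dots> = emeasure (measure_pmf (map_pmf (\<lambda>xs. xs ! ?K) ?M)) {S'. unachieved N p S' \<noteq> {}}"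
      by simp
    also have "\<dots> = emeasure (measure_pmf (iterk step S ?K)) {S'. unachieved N p S' \<noteq> {}}"
      by (subst tr_nth) auto
    also have "\<dots> \<le> ennreal \<delta>0" by (rule core_em[OF S True])
    finally show ?thesis .
  next
    case False
    let ?M = "tr step S (0 + 3 * L)"
    have eq: "emeasure (measure_pmf ?M) {xs. Bad (3 * L) 0 xs} = emeasure (measure_pmf ?M) ({xs. Bad (3 * L) 0 xs} \<inter> set_pmf ?M)"
      by (rule emeasure_Int_set_pmf[symmetric])
    have emp: "{xs. Bad (3 * L) 0 xs} \<inter> set_pmf ?M = {}"
    proof (intro equalityI subsetI)
      fix xs assume xs: "xs \<in> {xs. Bad (3 * L) 0 xs} \<inter> set_pmf ?M"
      have xsM: "xs \<in> set_pmf ?M" using xs by blast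
      have x0: "xs ! 0 = S" using tr_len[OF xsM] by simp
      have "Bad (3 * L) 0 xs" using xs by blast
      then have "Gd (xs ! 0)" unfolding Bad_def by auto
      then show "xs \<in> {}" using x0 False by simp
    qed simp
    show ?thesis unfolding eq emp by simp
  qed
next
  case (Suc n)
  note S = "Suc.prems"
  let ?K = "3 * L"
  show ?case
  proof (cases "Gd S")
    case True
    let ?M = "tr step S (Suc n + ?K)"
    have "emeasure (measure_pmf ?M) {xs. Bad ?K (Suc n) xs} = emeasure (measure_pmf ?M) ({xs. Bad ?K (Suc n) xs} \<inter> set_pmf ?M)"
      by (rule emeasure_Int_set_pmf[symmetric])
    also have "\<dots> \<le> emeasure (measure_pmf ?M) {xs. unachieved N p (xs ! ?K) \<noteq> {}}"
    proof (intro emeasure_mono subsetI)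
      fix xs assume xs: "xs \<in> {xs. Bad ?K (Suc n) xs} \<inter> set_pmf ?M"
      then obtain j where j: "j \<le> Suc n" "unachieved N p (xs ! (j + ?K)) \<noteq> {}" unfolding Bad_def by auto
      have xsM: "xs \<in> set_pmf ?M" using xs by blast
      have mono: "\<forall>i j'. i \<le> j' \<longrightarrow> j' \<le> Suc n + ?K \<longrightarrow> xs ! i \<subseteq> xs ! j'"
        using tr_support[OF S xsM] by blast
      then have "?K \<le> j + ?K \<longrightarrow> j + ?K \<le> Suc n + ?K \<longrightarrow> xs ! ?K \<subseteq> xs ! (j + ?K)" by blast
      then have sup: "xs ! ?K \<subseteq> xs ! (j + ?K)" using j(1) by simp
      have "unachieved N p (xs ! (j + ?K)) \<subseteq> unachieved N p (xs ! ?K)" by (rule unach_mono[OF sup])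
      then show "xs \<in> {xs. unachieved N p (xs ! ?K) \<noteq> {}}" using j by auto
    qed simp
    also have "\<dots> = emeasure (measure_pmf (map_pmf (\<lambda>xs. xs ! ?K) ?M)) {S'. unachieved N p S' \<noteq> {}}"
      by simp
    also have "\<dots> = emeasure (measure_pmf (iterk step S ?K)) {S'. unachieved N p S' \<noteq> {}}"
      by (subst tr_nth) auto
    also have "\<dots> \<le> ennreal \<delta>0" by (rule core_em[OF S True])
    finally show ?thesis .
  next
    case False
    have eq: "tr step S (Suc n + ?K) = bind_pmf (step S) (\<lambda>T. map_pmf ((#) S) (tr step T (n + ?K)))"
      using tr_forward[of step S "n + ?K"] by simp
    have "emeasure (measure_pmf (tr step S (Suc n + ?K))) {xs. Bad ?K (Suc n) xs}
        = (\<integral>\<^sup>+T. emeasure (measure_pmf (tr step T (n + ?K))) ((#) S -` {xs. Bad ?K (Suc n) xs}) \<partial>step S)"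
      unfolding eq by simp
    also have "\<dots> \<le> (\<integral>\<^sup>+T. ennreal \<delta>0 \<partial>step S)"
    proof (intro nn_integral_mono_AE AE_pmfI)
      fix T assume T: "T \<in> set_pmf (step S)"
      have TS: "T \<subseteq> {1..N}" using step_support[OF S T] by auto
      have "emeasure (measure_pmf (tr step T (n + ?K))) ((#) S -` {xs. Bad ?K (Suc n) xs})
          \<le> emeasure (measure_pmf (tr step T (n + ?K))) {xs. Bad ?K n xs}"
      proof (intro emeasure_mono subsetI)
        fix ys assume "ys \<in> (#) S -` {xs. Bad ?K (Suc n) xs}"
        then obtain j where j: "j \<le> Suc n" "Gd ((S # ys) ! j)" "unachieved N p ((S # ys) ! (j + ?K)) \<noteq> {}"
          unfolding Bad_def by auto
        then obtain i where i: "j = Suc i" using False by (cases j) auto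
        have "(S # ys) ! (j + ?K) = ys ! (i + ?K)" unfolding i by simp
        then show "ys \<in> {xs. Bad ?K n xs}" using j unfolding Bad_def i by auto
      qed simp
      also have "\<dots> \<le> ennreal \<delta>0" by (rule Suc.IH[OF TS])
      finally show "emeasure (measure_pmf (tr step T (n + ?K))) ((#) S -` {xs. Bad ?K (Suc n) xs}) \<le> ennreal \<delta>0" .
    qed
    also have "\<dots> = ennreal \<delta>0" by simp
    finally show ?thesis .
  qed
qed

lemma main_prob:
  "measure_pmf.prob (hp_traj N p (n + 3 * L))
     {xs. \<forall>j\<le>n. real (card (unachieved N p (xs ! j))) \<le> real p / real (log_star (real p))
            \<longrightarrow> unachieved N p (xs ! (j + 3 * L)) = {}} \<ge> 1 - \<delta>0"
proof -
  let ?M = "tr step {} (n + 3 * L)"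
  have set: "{xs. \<forall>j\<le>n. real (card (unachieved N p (xs ! j))) \<le> real p / real (log_star (real p))
            \<longrightarrow> unachieved N p (xs ! (j + 3 * L)) = {}} = UNIV - {xs. Bad (3 * L) n xs}"
    unfolding Bad_def Gd_def Lg_def by auto
  have "emeasure (measure_pmf ?M) {xs. Bad (3 * L) n xs} \<le> ennreal \<delta>0"
    by (rule main_induct) simp
  then have b: "measure_pmf.prob ?M {xs. Bad (3 * L) n xs} \<le> \<delta>0"
    using delta0_nonneg by (simp add: measure_pmf.emeasure_eq_measure ennreal_le_iff)
  have "measure_pmf.prob ?M (UNIV - {xs. Bad (3 * L) n xs}) = 1 - measure_pmf.prob ?M {xs. Bad (3 * L) n xs}"
    using measure_pmf.prob_compl[of "{xs. Bad (3 * L) n xs}" ?M] by simp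
  then show ?thesis unfolding hp_traj_tr set using b by linarith
qed

lemma delta0_eq: "\<delta>0 = hfun (real (log_star (real p)))"
  unfolding \<delta>0_def hfun_def aa_def Lg_def L_def by (simp add: powr_realpow)

end


lemma hfun_tendsto: "(hfun \<longlongrightarrow> 0) at_top"
  unfolding hfun_def by real_asymp

lemma delta_tendsto: "(\<lambda>p::nat. hfun (real (log_star (real p)))) \<longlonglongrightarrow> 0"
  using filterlim_compose[OF hfun_tendsto log_star_tendsto] .

theorem lemma2p6:
  "\<exists>C::real. C > 0 \<and> (\<exists>\<delta>::nat \<Rightarrow> real. \<delta> \<longlonglongrightarrow> 0 \<and>
     (\<forall>p N n. 2 \<le> p \<longrightarrow> 0 < N \<longrightarrow> p dvd N \<longrightarrow>
        measure_pmf.prob (hp_traj N p (n + nat \<lceil>C * real (log_star (real p))\<rceil>))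
          {xs. \<forall>j\<le>n. real (card (unachieved N p (xs ! j))) \<le> real p / real (log_star (real p))
                 \<longrightarrow> unachieved N p (xs ! (j + nat \<lceil>C * real (log_star (real p))\<rceil>)) = {}}
        \<ge> 1 - \<delta> p))"
proof (intro exI conjI allI impI)
  show "(3::real) > 0" by simp
  show "(\<lambda>p::nat. hfun (real (log_star (real p)))) \<longlonglongrightarrow> 0" by (rule delta_tendsto)
  fix p N n :: nat
  assume h: "2 \<le> p" "0 < N" "p dvd N"
  interpret hp N p using h by unfold_locales
  have K0: "3 * real (log_star (real p)) = real (3 * L)" unfolding L_def by simp
  have K: "nat \<lceil>3 * real (log_star (real p))\<rceil> = 3 * L" unfolding K0 ceiling_of_nat nat_int ..
  show "measure_pmf.prob (hp_traj N p (n + nat \<lceil>3 * real (log_star (real p))\<rceil>))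
          {xs. \<forall>j\<le>n. real (card (unachieved N p (xs ! j))) \<le> real p / real (log_star (real p))
                 \<longrightarrow> unachieved N p (xs ! (j + nat \<lceil>3 * real (log_star (real p))\<rceil>)) = {}}
        \<ge> 1 - hfun (real (log_star (real p)))"
    unfolding K using main_prob[of n] delta0_eq by simp
qed

end
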